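(* Let $S>0$ and $K>0$ be fixed with $K\neq S$, let $x:=\ln(K/S)$, and for a maturity $T>0$ let $C(T,K)$ be a European call price (zero interest rate) with implied lognormal volatility $\sigma_{LN}$, i.e. $C(T,K)=\mathrm{BS}(S,K,T,\sigma_{LN})$ where $\mathrm{BS}(S,K,T,\sigma)=S\,\mathcal N(d_+)-K\,\mathcal N(d_-)$, $d_\pm=\frac{\ln(S/K)\pm\sigma^2T/2}{\sigma\sqrt T}$, $\mathcal N$ the standard normal distribution function. (Case 1: short expiry) Let $\mathrm{TV}:=C(T,K)-(S-K)_+$, $\lambda:=-1/\ln(\mathrm{TV}/S)$, $\gamma:=\ln\!\big(4\sqrt\pi\,e^{-x/2}/|x|\big)$, $\alpha_1:=-\tfrac32-\tfrac{x^2}{16}$. Then, as $T\to0$ (in the regime $\sigma_{LN}\sqrt T\to0$), $\sigma_{LN}^2T=\frac{x^2}{2}\,v$ with $$v=\lambda-\tfrac32\lambda^2\ln\lambda+\gamma\lambda^2+\tfrac94\lambda^3\ln^2\lambda+\big(\tfrac94-3\gamma\big)\lambda^3\ln\lambda+\big(\gamma^2-\tfrac32\gamma-\alpha_1\big)\lambda^3+o(\lambda^3).$$ (Case 2: large expiry) Let $\mathrm{CC}:=S-C(T,K)$, $\lambda:=-1/\ln(\mathrm{CC}/S)$, $\gamma:=\ln\!\big(\sqrt\pi\,e^{-x/2}\big)$, $\alpha_1:=-\tfrac12-\tfrac{x^2}{16}$. Then, as $T\to+\infty$ (in the regime $\sigma_{LN}\sqrt T\to+\infty$), $$\sigma_{LN}^2T=\frac8\lambda\Big[1+\tfrac12\lambda\ln\lambda-\gamma\lambda-\tfrac14\lambda^2\ln\lambda+\big(\tfrac\gamma2+\alpha_1\big)\lambda^2+o(\lambda^2)\Big].$$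 In particular, as $T\to+\infty$, $\sigma_{LN}\sim2\sqrt{-2\ln(\mathrm{CC}/S)/T}$. *)

theory Defs
  imports "HOL-Probability.Distributions" "HOL-Library.Landau_Symbols"
begin

definition Ncdf :: "real \<Rightarrow> real" where
  "Ncdf y = (LBINT t:{..y}. std_normal_density t)"

definition BS :: "real \<Rightarrow> real \<Rightarrow> real \<Rightarrow> real \<Rightarrow> real" where
  "BS S K T \<sigma> =
     S * Ncdf ((ln (S / K) + \<sigma>\<^sup>2 * T / 2) / (\<sigma> * sqrt T))
   - K * Ncdf ((ln (S / K) - \<sigma>\<^sup>2 * T / 2) / (\<sigma> * sqrt T))"

end

theory Submission
  imports Defs "HOL-Real_Asymp.Real_Asymp"
begin


lemma phi_eq: "std_normal_density z = exp (- z\<^sup>2 / 2) / sqrt (2 * pi)"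
  by (simp add: std_normal_density_def)

lemma cont_phi: "continuous_on A std_normal_density"
  unfolding phi_eq by (intro continuous_intros) auto

lemma setint_phi: "set_integrable lborel A std_normal_density" if "A \<in> sets lborel"
  unfolding set_integrable_def using that by (intro integrable_mult_indicator) auto

lemma Ncdf_split:
  assumes "a \<le> u"
  shows "Ncdf u = (LINT t:{..<a}|lborel. std_normal_density t) + integral {a..u} std_normal_density"
proof -
  have "{..u} = {..<a} \<union> {a..u}" using assms by auto
  hence "Ncdf u = (LINT t:{..<a}\<union>{a..u}|lborel. std_normal_density t)" by (simp add: Ncdf_def)
  also have "\<dots> = (LINT t:{..<a}|lborel. std_normal_density t) + (LINT t:{a..u}|lborel. std_normal_density t)"
    by (rule set_integral_Un) (auto intro: setint_phi)
  also have "(LINT t:{a..u}|lborel. std_normal_density t) = integral {a..u} std_normal_density"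
    by (rule set_borel_integral_eq_integral) (auto intro: setint_phi)
  finally show ?thesis .
qed

lemma DERIV_Ncdf: "DERIV Ncdf y :> std_normal_density y"
proof -
  let ?a = "y - 1" and ?b = "y + 1"
  have "((\<lambda>u. integral {?a..u} std_normal_density) has_real_derivative std_normal_density y) (at y within {?a..?b})"
    by (rule integral_has_real_derivative) (auto intro: cont_phi)
  hence "((\<lambda>u. (LINT t:{..<?a}|lborel. std_normal_density t) + integral {?a..u} std_normal_density)
      has_real_derivative std_normal_density y) (at y within {?a..?b})"
    by (auto intro!: derivative_eq_intros)
  hence "(Ncdf has_real_derivative std_normal_density y) (at y within {?a..?b})"
    by (rule has_field_derivative_transform_within[where d=1]) (auto simp: Ncdf_split)
  thus ?thesis by (simp add: at_within_Icc_at)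
qed

lemma Ncdf_as_open: "Ncdf y = (LINT t:{..<y}|lborel. std_normal_density t)"
  using Ncdf_split[of y y] by simp

lemma Ncdf_at_bot: "(Ncdf \<longlongrightarrow> 0) at_bot"
proof -
  have lim: "((\<lambda>a. LINT t:{a..0}|lborel. std_normal_density t) \<longlongrightarrow> (LINT t:{..0}|lborel. std_normal_density t)) at_bot"
    by (rule tendsto_set_lebesgue_integral_at_bot) (auto intro: setint_phi)
  have eq: "\<forall>\<^sub>F a in at_bot. Ncdf a = (LINT t:{..0}|lborel. std_normal_density t) - (LINT t:{a..0}|lborel. std_normal_density t)"
  proof (rule eventually_at_bot_linorderI[of 0])
    fix a :: real assume "a \<le> 0"
    hence "{..0} = {..<a} \<union> {a..0}" by auto
    hence "(LINT t:{..0}|lborel. std_normal_density t) = (LINT t:{..<a}|lborel. std_normal_density t) + (LINT t:{a..0}|lborel. std_normal_density t)"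
      by (simp, intro set_integral_Un) (auto intro: setint_phi)
    thus "Ncdf a = (LINT t:{..0}|lborel. std_normal_density t) - (LINT t:{a..0}|lborel. std_normal_density t)"
      by (simp add: Ncdf_as_open)
  qed
  have "((\<lambda>a. (LINT t:{..0}|lborel. std_normal_density t) - (LINT t:{a..0}|lborel. std_normal_density t)) \<longlongrightarrow> 0) at_bot"
    using tendsto_diff[OF tendsto_const[of "LINT t:{..0}|lborel. std_normal_density t"] lim] by simp
  thus ?thesis using tendsto_cong[OF eq] by simp
qed

lemma Ncdf_at_top: "(Ncdf \<longlongrightarrow> 1) at_top"
proof -
  have lim: "((\<lambda>b. LINT t:{0..b}|lborel. std_normal_density t) \<longlongrightarrow> (LINT t:{0..}|lborel. std_normal_density t)) at_top"
    by (rule tendsto_set_lebesgue_integral_at_top) (auto intro: setint_phi)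
  have tot: "(LINT t:{..<0}|lborel. std_normal_density t) + (LINT t:{0..}|lborel. std_normal_density t) = 1"
  proof -
    have "UNIV = {..<0::real} \<union> {0..}" by auto
    moreover have "(LINT t:{..<0}\<union>{0..}|lborel. std_normal_density t) = (LINT t:{..<0}|lborel. std_normal_density t) + (LINT t:{0..}|lborel. std_normal_density t)"
      by (rule set_integral_Un) (auto intro: setint_phi)
    ultimately have "(LINT t:UNIV|lborel. std_normal_density t) = (LINT t:{..<0}|lborel. std_normal_density t) + (LINT t:{0..}|lborel. std_normal_density t)"
      by simp
    moreover have "(LINT t:UNIV|lborel. std_normal_density t) = 1" by (simp add: set_lebesgue_integral_def)
    ultimately show ?thesis by simp
  qed
  have eq: "\<forall>\<^sub>F b in at_top. Ncdf b = (LINT t:{..<0}|lborel. std_normal_density t) + (LINT t:{0..b}|lborel. std_normal_density t)"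
  proof (rule eventually_at_top_linorderI[of 0])
    fix b :: real assume "0 \<le> b"
    thus "Ncdf b = (LINT t:{..<0}|lborel. std_normal_density t) + (LINT t:{0..b}|lborel. std_normal_density t)"
      using Ncdf_split[of 0 b] set_borel_integral_eq_integral(2)[OF setint_phi, of "{0..b}"] by simp
  qed
  have "((\<lambda>b. (LINT t:{..<0}|lborel. std_normal_density t) + (LINT t:{0..b}|lborel. std_normal_density t)) \<longlongrightarrow> 1) at_top"
    using tendsto_add[OF tendsto_const[of "LINT t:{..<0}|lborel. std_normal_density t"] lim] tot by simp
  thus ?thesis using tendsto_cong[OF eq] by simp
qed

lemma Ncdf_sym: "Ncdf z + Ncdf (- z) = 1"
proof -
  let ?F = "\<lambda>z. Ncdf z + Ncdf (- z)"
  have d: "\<forall>z. DERIV ?F z :> 0"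
  proof
    fix z
    have "DERIV ?F z :> std_normal_density z + std_normal_density (-z) * (-1)"
      by (auto intro!: derivative_eq_intros DERIV_Ncdf[THEN DERIV_chain2])
    thus "DERIV ?F z :> 0" by (simp add: std_normal_density_def)
  qed
  have c: "\<And>w. ?F w = ?F z" using DERIV_isconst_all[OF d] by blast
  have "(?F \<longlongrightarrow> 1 + 0) at_top"
    by (intro tendsto_add Ncdf_at_top filterlim_compose[OF Ncdf_at_bot] filterlim_uminus_at_bot_at_top)
  moreover have "?F = (\<lambda>w. ?F z)" using c by auto
  hence "(?F \<longlongrightarrow> ?F z) at_top" by simp
  ultimately show ?thesis using tendsto_unique[OF trivial_limit_at_top_linorder] by fastforce
qed




definition Q :: "real \<Rightarrow> real" where "Q z = Ncdf (- z)"
definition phi :: "real \<Rightarrow> real" where "phi z = exp (- z\<^sup>2 / 2) / sqrt (2 * pi)"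

lemma phi_pos: "phi z > 0" by (simp add: phi_def)

lemma DERIV_Q: "DERIV Q z :> - phi z"
proof -
  have "DERIV (\<lambda>z. Ncdf (-z)) z :> std_normal_density (-z) * (-1)"
    by (rule DERIV_chain2[OF DERIV_Ncdf]) (auto intro!: derivative_eq_intros)
  thus ?thesis unfolding Q_def by (simp add: phi_def std_normal_density_def)
qed

lemma Q_at_top: "(Q \<longlongrightarrow> 0) at_top"
  unfolding Q_def by (intro filterlim_compose[OF Ncdf_at_bot] filterlim_uminus_at_bot_at_top)

lemma DERIV_phi: "DERIV phi z :> - z * phi z"
  unfolding phi_def
  by (auto intro!: derivative_eq_intros simp: field_simps power2_eq_square)

lemma nonneg_of_decr:
  fixes g g' :: "real \<Rightarrow> real"
  assumes d: "\<And>z. z > 0 \<Longrightarrow> DERIV g z :> g' z" and n: "\<And>z. z > 0 \<Longrightarrow> g' z \<le> 0"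
    and l: "(g \<longlongrightarrow> 0) at_top" and z: "z > 0"
  shows "g z \<ge> 0"
proof -
  have "\<forall>\<^sub>F w in at_top. g w \<le> g z"
  proof (rule eventually_at_top_linorderI[of z])
    fix w assume "z \<le> w"
    show "g w \<le> g z"
    proof (rule DERIV_nonpos_imp_nonincreasing[OF \<open>z \<le> w\<close>])
      fix x assume "z \<le> x" "x \<le> w"
      hence "x > 0" using z by auto
      thus "\<exists>y. DERIV g x :> y \<and> y \<le> 0" using d n by blast
    qed
  qed
  thus ?thesis using tendsto_upperbound[OF l _ trivial_limit_at_top_linorder] by blast
qed

lemma Mills_gen:
  fixes P P' :: "real \<Rightarrow> real"
  assumes dP: "\<And>z. z > 0 \<Longrightarrow> DERIV P z :> P' z"
    and sgn: "\<And>z. z > 0 \<Longrightarrow> - z * P z + P' z + 1 \<le> 0"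
    and lim: "((\<lambda>z. phi z * P z) \<longlongrightarrow> 0) at_top" and z: "z > 0"
  shows "Q z \<le> phi z * P z"
proof -
  have D: "DERIV (\<lambda>z. phi z * P z - Q z) z :> phi z * (- z * P z + P' z + 1)" if "z > 0" for z
      using dP[OF that]
      by (auto intro!: derivative_eq_intros DERIV_phi DERIV_Q simp: algebra_simps)
  have S: "phi z * (- z * P z + P' z + 1) \<le> 0" if "z > 0" for z
      using sgn[OF that] phi_pos[of z] by (simp add: mult_nonneg_nonpos)
  have L: "((\<lambda>z. phi z * P z - Q z) \<longlongrightarrow> 0) at_top"
      using tendsto_diff[OF lim Q_at_top] by simp
  have "phi z * P z - Q z \<ge> 0"
    using nonneg_of_decr[OF D S L z] by simp
  thus ?thesis by simp
qed

lemma Mills_gen_lower: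
  fixes P P' :: "real \<Rightarrow> real"
  assumes dP: "\<And>z. z > 0 \<Longrightarrow> DERIV P z :> P' z"
    and sgn: "\<And>z. z > 0 \<Longrightarrow> - z * P z + P' z + 1 \<ge> 0"
    and lim: "((\<lambda>z. phi z * P z) \<longlongrightarrow> 0) at_top" and z: "z > 0"
  shows "phi z * P z \<le> Q z"
proof -
  have D: "DERIV (\<lambda>z. Q z - phi z * P z) z :> - (phi z * (- z * P z + P' z + 1))" if "z > 0" for z
      using dP[OF that]
      by (auto intro!: derivative_eq_intros DERIV_phi DERIV_Q simp: algebra_simps)
  have S: "- (phi z * (- z * P z + P' z + 1)) \<le> 0" if "z > 0" for z
      using sgn[OF that] phi_pos[of z] by simp
  have L: "((\<lambda>z. Q z - phi z * P z) \<longlongrightarrow> 0) at_top"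
      using tendsto_diff[OF Q_at_top lim] by simp
  have "Q z - phi z * P z \<ge> 0"
    using nonneg_of_decr[OF D S L z] by simp
  thus ?thesis by simp
qed

definition U5 :: "real \<Rightarrow> real" where "U5 z = 1/z - 1/z^3 + 3/z^5"
definition L7 :: "real \<Rightarrow> real" where "L7 z = 1/z - 1/z^3 + 3/z^5 - 15/z^7"
definition L3 :: "real \<Rightarrow> real" where "L3 z = 1/z - 1/z^3"

lemma Mills_U5: "z > 0 \<Longrightarrow> Q z \<le> phi z * U5 z"
proof (rule Mills_gen[where P' = "\<lambda>z. - 1/z^2 + 3/z^4 - 15/z^6"])
  fix z :: real assume z: "z > 0"
  show "DERIV U5 z :> - 1/z^2 + 3/z^4 - 15/z^6" unfolding U5_def using z
    by (auto intro!: derivative_eq_intros simp: field_simps eval_nat_numeral)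
  show "- z * U5 z + (- 1/z^2 + 3/z^4 - 15/z^6) + 1 \<le> 0" unfolding U5_def using z
    by (simp add: field_simps eval_nat_numeral)
next
  show "((\<lambda>z. phi z * U5 z) \<longlongrightarrow> 0) at_top" unfolding phi_def U5_def by real_asymp
qed

lemma Mills_L7: "z > 0 \<Longrightarrow> phi z * L7 z \<le> Q z"
proof (rule Mills_gen_lower[where P' = "\<lambda>z. - 1/z^2 + 3/z^4 - 15/z^6 + 105/z^8"])
  fix z :: real assume z: "z > 0"
  show "DERIV L7 z :> - 1/z^2 + 3/z^4 - 15/z^6 + 105/z^8" unfolding L7_def using z
    by (auto intro!: derivative_eq_intros simp: field_simps eval_nat_numeral)
  show "- z * L7 z + (- 1/z^2 + 3/z^4 - 15/z^6 + 105/z^8) + 1 \<ge> 0" unfolding L7_def using z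
    by (simp add: field_simps eval_nat_numeral)
next
  show "((\<lambda>z. phi z * L7 z) \<longlongrightarrow> 0) at_top" unfolding phi_def L7_def by real_asymp
qed

lemma Mills_L3: "z > 0 \<Longrightarrow> phi z * L3 z \<le> Q z"
proof (rule Mills_gen_lower[where P' = "\<lambda>z. - 1/z^2 + 3/z^4"])
  fix z :: real assume z: "z > 0"
  show "DERIV L3 z :> - 1/z^2 + 3/z^4" unfolding L3_def using z
    by (auto intro!: derivative_eq_intros simp: field_simps eval_nat_numeral)
  show "- z * L3 z + (- 1/z^2 + 3/z^4) + 1 \<ge> 0" unfolding L3_def using z
    by (simp add: field_simps eval_nat_numeral)
next
  show "((\<lambda>z. phi z * L3 z) \<longlongrightarrow> 0) at_top" unfolding phi_def L3_def by real_asymp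
qed




definition VV :: "real \<Rightarrow> real \<Rightarrow> real \<Rightarrow> real" where
  "VV g a l = l - 3/2*l^2*ln l + g*l^2 + 9/4*l^3*(ln l)^2 + (9/4 - 3*g)*l^3*ln l + (g^2 - 3/2*g + a)*l^3"

definition WW :: "real \<Rightarrow> real \<Rightarrow> real \<Rightarrow> real" where
  "WW g a l = 1 + 1/2*l*ln l - g*l - 1/4*l^2*ln l + (g/2 - a)*l^2"

lemma VV_mono: "\<exists>\<delta>>0. \<forall>l1 l2. 0 < l1 \<longrightarrow> l1 \<le> l2 \<longrightarrow> l2 < \<delta> \<longrightarrow> VV g a l1 \<le> VV g a l2"
proof -
  define D where "D l = 1 - 3*l*ln l - 3/2*l + 2*g*l + 27/4*l^2*(ln l)^2 + 9/2*l^2*ln l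
     + 3*(9/4-3*g)*l^2*ln l + (9/4-3*g)*l^2 + 3*(g^2-3/2*g+a)*l^2" for l
  have der: "DERIV (VV g a) l :> D l" if "l > 0" for l
    unfolding VV_def D_def using that
    by (auto intro!: derivative_eq_intros simp: field_simps eval_nat_numeral)
  have "\<forall>\<^sub>F l in at_right 0. D l > 0" unfolding D_def by real_asymp
  then obtain b where b: "b > 0" "\<And>l. l > 0 \<Longrightarrow> l < b \<Longrightarrow> D l > 0"
    by (auto simp: eventually_at_right_field)
  show ?thesis
  proof (intro exI[of _ b] conjI allI impI b(1))
    fix l1 l2 :: real assume l: "0 < l1" "l1 \<le> l2" "l2 < b"
    show "VV g a l1 \<le> VV g a l2"
    proof (rule DERIV_nonneg_imp_nondecreasing[OF l(2)])
      fix y assume "l1 \<le> y" "y \<le> l2"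
      with l have "y > 0" "y < b" by auto
      thus "\<exists>d. DERIV (VV g a) y :> d \<and> 0 \<le> d" using der b(2)[of y] by (auto intro!: exI[of _ "D y"])
    qed
  qed
qed

lemma WW_mono: "\<exists>\<delta>>0. \<forall>w l1 l2. 0 < w \<longrightarrow> 0 < l1 \<longrightarrow> l1 \<le> l2 \<longrightarrow> l2 < \<delta> \<longrightarrow> w*l1 - WW g a l1 \<le> w*l2 - WW g a l2"
proof -
  define D where "D l = 1/2*ln l + 1/2 - g - 1/2*l*ln l - 1/4*l + (g - 2*a)*l" for l
  have der: "DERIV (\<lambda>l. w*l - WW g a l) l :> w - D l" if "l > 0" for l w
    unfolding WW_def D_def using that
    by (auto intro!: derivative_eq_intros simp: field_simps eval_nat_numeral)
  have "\<forall>\<^sub>F l in at_right 0. D l < 0" unfolding D_def by real_asymp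
  then obtain b where b: "b > 0" "\<And>l. l > 0 \<Longrightarrow> l < b \<Longrightarrow> D l < 0"
    by (auto simp: eventually_at_right_field)
  show ?thesis
  proof (intro exI[of _ b] conjI allI impI b(1))
    fix w l1 l2 :: real assume l: "0 < w" "0 < l1" "l1 \<le> l2" "l2 < b"
    show "w*l1 - WW g a l1 \<le> w*l2 - WW g a l2"
    proof (rule DERIV_nonneg_imp_nondecreasing[OF l(3), where f = "\<lambda>l. w*l - WW g a l"])
      fix y assume "l1 \<le> y" "y \<le> l2"
      with l have "y > 0" "y < b" by auto
      thus "\<exists>d. DERIV (\<lambda>l. w*l - WW g a l) y :> d \<and> 0 \<le> d" using der b(2)[of y] l(1)
        by (auto intro!: exI[of _ "w - D y"])
    qed
  qed
qed

lemma INV1_asymp: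
  "(\<lambda>v. v - VV g a (1/(1/v - 3/2 * ln v + g + a* v + c* v^2))) \<in> o[at_right 0](\<lambda>v. v^3)"
  unfolding VV_def
  by (real_asymp simp add: field_simps power2_eq_square power_numeral_reduce mult_ac)

lemma INV2_asymp:
  "(\<lambda>w. w * (1/(w + 1/2 * ln w + g + a/w + c/w^2)) - WW g a (1/(w + 1/2 * ln w + g + a/w + c/w^2)))
   \<in> o[at_top](\<lambda>w. 1/w^2)"
  unfolding WW_def
  by (real_asymp simp add: field_simps power2_eq_square power_numeral_reduce mult_ac)

lemma INV1:
  fixes g a C \<epsilon> :: real
  assumes C: "C \<ge> 0" and e: "\<epsilon> > 0"
  shows "\<forall>\<^sub>F v in at_right 0. \<forall>E. \<bar>E\<bar> \<le> C* v^2 \<longrightarrow>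
     1/(1/v - 3/2*ln v + g + a* v + E) > 0 \<and>
     \<bar>v - VV g a (1/(1/v - 3/2*ln v + g + a* v + E))\<bar> \<le> \<epsilon> * (1/(1/v - 3/2*ln v + g + a* v + E))^3"
proof -
  define den where "den c v = 1/v - 3/2*ln v + g + a* v + c* v^2" for c v
  obtain \<delta> where \<delta>: "\<delta> > 0" "\<And>l1 l2. 0 < l1 \<Longrightarrow> l1 \<le> l2 \<Longrightarrow> l2 < \<delta> \<Longrightarrow> VV g a l1 \<le> VV g a l2"
    using VV_mono[of g a] by blast
  have e8: "\<epsilon>/8 > 0" using e by simp
  have ev1: "\<forall>\<^sub>F v in at_right 0. \<bar>v - VV g a (1/den c v)\<bar> \<le> \<epsilon>/8 * \<bar>v^3\<bar>" for c
    using landau_o.smallD[OF INV1_asymp[of g a c] e8] by (simp add: den_def)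
  have ev2: "\<forall>\<^sub>F v in at_right 0. den c v > 0" for c unfolding den_def by real_asymp
  have ev3: "\<forall>\<^sub>F v in at_right 0. 1/den c v \<ge> v/2" for c unfolding den_def by real_asymp
  have lim: "((\<lambda>v. 1/den c v) \<longlongrightarrow> 0) (at_right 0)" for c unfolding den_def by real_asymp
  have ev4: "\<forall>\<^sub>F v in at_right 0. 1/den c v < \<delta>" for c using order_tendstoD(2)[OF lim \<delta>(1)] .
  have ev5: "\<forall>\<^sub>F v in at_right (0::real). v > 0" by (simp add: eventually_at_right_less)
  show ?thesis
    using ev1[of C] ev1[of "-C"] ev2[of C] ev2[of "-C"] ev3[of C] ev4[of "-C"] ev5
  proof eventually_elim
    case (elim v)
    show ?case
    proof (intro allI impI)
      fix E assume E: "\<bar>E\<bar> \<le> C* v^2"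
      define d where "d = 1/v - 3/2*ln v + g + a* v + E"
      have dlo: "den (-C) v \<le> d" and dhi: "d \<le> den C v" using E by (auto simp: den_def d_def abs_le_iff)
      have dpos: "d > 0" using dlo elim by linarith
      have l1: "1/den C v \<le> 1/d" using dhi dpos by (simp add: frac_le)
      have l2: "1/d \<le> 1/den (-C) v" using dlo elim by (simp add: frac_le)
      have p1: "1/den C v > 0" using elim by simp
      have m1: "VV g a (1/den C v) \<le> VV g a (1/d)" by (rule \<delta>(2)) (use l1 l2 p1 elim in auto)
      have m2: "VV g a (1/d) \<le> VV g a (1/den (-C) v)" by (rule \<delta>(2)) (use l1 l2 p1 dpos elim in auto)
      have "\<bar>v - VV g a (1/d)\<bar> \<le> \<epsilon>/8 * \<bar>v^3\<bar>" using m1 m2 elim(1,2) unfolding abs_le_iff by linarith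
      also have "\<dots> = \<epsilon> * (v/2)^3" using elim by (simp add: power_divide)
      also have "\<dots> \<le> \<epsilon> * (1/d)^3"
        using e elim l1 by (intro mult_left_mono power_mono) auto
      finally show "1/(1/v - 3/2*ln v + g + a* v + E) > 0 \<and>
         \<bar>v - VV g a (1/(1/v - 3/2*ln v + g + a* v + E))\<bar> \<le> \<epsilon> * (1/(1/v - 3/2*ln v + g + a* v + E))^3"
        using dpos by (simp add: d_def)
    qed
  qed
qed

lemma INV2:
  fixes g a C \<epsilon> :: real
  assumes C: "C \<ge> 0" and e: "\<epsilon> > 0"
  shows "\<forall>\<^sub>F w in at_top. \<forall>E. \<bar>E\<bar> \<le> C/w^2 \<longrightarrow>
     1/(w + 1/2*ln w + g + a/w + E) > 0 \<and> 1/(w + 1/2*ln w + g + a/w + E) \<le> 2/w \<and>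
     \<bar>w * (1/(w + 1/2*ln w + g + a/w + E)) - WW g a (1/(w + 1/2*ln w + g + a/w + E))\<bar>
        \<le> \<epsilon> * (1/(w + 1/2*ln w + g + a/w + E))^2"
proof -
  define den where "den c w = w + 1/2*ln w + g + a/w + c/w^2" for c w
  obtain \<delta> where \<delta>: "\<delta> > 0" "\<And>w l1 l2. 0 < w \<Longrightarrow> 0 < l1 \<Longrightarrow> l1 \<le> l2 \<Longrightarrow> l2 < \<delta> \<Longrightarrow>
       w*l1 - WW g a l1 \<le> w*l2 - WW g a l2"
    using WW_mono[of g a] by blast
  have e4: "\<epsilon>/4 > 0" using e by simp
  have ev1: "\<forall>\<^sub>F w in at_top. \<bar>w * (1/den c w) - WW g a (1/den c w)\<bar> \<le> \<epsilon>/4 * \<bar>1/w^2\<bar>" for c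
    using landau_o.smallD[OF INV2_asymp[of g a c] e4] by (simp add: den_def)
  have ev2: "\<forall>\<^sub>F w in at_top. den c w > 0" for c unfolding den_def by real_asymp
  have ev3: "\<forall>\<^sub>F w in at_top. 1/den c w \<ge> 1/(2*w)" for c unfolding den_def by real_asymp
  have ev3': "\<forall>\<^sub>F w in at_top. 1/den c w \<le> 2/w" for c unfolding den_def by real_asymp
  have lim: "((\<lambda>w. 1/den c w) \<longlongrightarrow> 0) at_top" for c unfolding den_def by real_asymp
  have ev4: "\<forall>\<^sub>F w in at_top. 1/den c w < \<delta>" for c using order_tendstoD(2)[OF lim \<delta>(1)] .
  have ev5: "\<forall>\<^sub>F w in at_top. (w::real) > 0" by (rule eventually_gt_at_top)
  show ?thesis
    using ev1[of C] ev1[of "-C"] ev2[of C] ev2[of "-C"] ev3[of C] ev3'[of "-C"] ev4[of "-C"] ev5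
  proof eventually_elim
    case (elim w)
    show ?case
    proof (intro allI impI)
      fix E assume E: "\<bar>E\<bar> \<le> C/w^2"
      define d where "d = w + 1/2*ln w + g + a/w + E"
      have dlo: "den (-C) w \<le> d" and dhi: "d \<le> den C w" using E by (auto simp: den_def d_def abs_le_iff)
      have dpos: "d > 0" using dlo elim by linarith
      have l1: "1/den C w \<le> 1/d" using dhi dpos by (simp add: frac_le)
      have l2: "1/d \<le> 1/den (-C) w" using dlo elim by (simp add: frac_le)
      have p1: "1/den C w > 0" using elim by simp
      have m1: "w * (1/den C w) - WW g a (1/den C w) \<le> w * (1/d) - WW g a (1/d)"
        by (rule \<delta>(2)) (use l1 l2 p1 elim in auto)
      have m2: "w * (1/d) - WW g a (1/d) \<le> w * (1/den (-C) w) - WW g a (1/den (-C) w)"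
        by (rule \<delta>(2)) (use l1 l2 p1 dpos elim in auto)
      have "\<bar>w * (1/d) - WW g a (1/d)\<bar> \<le> \<epsilon>/4 * \<bar>1/w^2\<bar>" using m1 m2 elim(1,2) unfolding abs_le_iff by linarith
      also have "\<dots> = \<epsilon> * (1/(2*w))^2" using elim by (simp add: power_divide)
      also have "\<dots> \<le> \<epsilon> * (1/d)^2"
        using e elim l1 by (intro mult_left_mono power_mono) auto
      finally show "1/(w + 1/2*ln w + g + a/w + E) > 0 \<and> 1/(w + 1/2*ln w + g + a/w + E) \<le> 2/w \<and>
         \<bar>w * (1/(w + 1/2*ln w + g + a/w + E)) - WW g a (1/(w + 1/2*ln w + g + a/w + E))\<bar>
        \<le> \<epsilon> * (1/(w + 1/2*ln w + g + a/w + E))^2"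
        using dpos l2 elim by (simp add: d_def)
    qed
  qed
qed




lemma R1a: fixes y :: real assumes "y > 0"
  shows "\<forall>\<^sub>F s in at_right 0. L7 (y/s - s/2) - U5 (y/s + s/2) > 0"
  using assms unfolding L7_def U5_def
  by (real_asymp simp add: field_simps power2_eq_square power_numeral_reduce mult_ac assms less_imp_neq[OF assms, symmetric])
lemma R1b: fixes y :: real assumes "y > 0"
  shows "\<forall>\<^sub>F s in at_right 0. y/s - s/2 > 0"
  using assms by (real_asymp simp add: assms)
lemma R1c: fixes y :: real assumes "y > 0"
  shows "(\<lambda>s. - ln (y\<^sup>2 * (L7 (y/s - s/2) - U5 (y/s + s/2)) / s^3) - 3 * s\<^sup>2 / y\<^sup>2) \<in> O[at_right 0](\<lambda>s. s^4)"
  using assms unfolding L7_def U5_def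
  by (real_asymp simp add: field_simps power2_eq_square power_numeral_reduce mult_ac assms less_imp_neq[OF assms, symmetric])
lemma R1d: fixes y :: real assumes "y > 0"
  shows "(\<lambda>s. - ln (y\<^sup>2 * (U5 (y/s - s/2) - L7 (y/s + s/2)) / s^3) - 3 * s\<^sup>2 / y\<^sup>2) \<in> O[at_right 0](\<lambda>s. s^4)"
  using assms unfolding L7_def U5_def
  by (real_asymp simp add: field_simps power2_eq_square power_numeral_reduce mult_ac assms less_imp_neq[OF assms, symmetric])
lemma R1e: fixes c :: real assumes "c > 0"
  shows "filterlim (\<lambda>s. c * s\<^sup>2) (at_right 0) (at_right 0)"
  using assms by (real_asymp simp add: assms)

lemma R2a: fixes x :: real
  shows "\<forall>\<^sub>F s in at_top. L3 (s/2 - x/s) + L3 (s/2 + x/s) > 0"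
  unfolding L3_def
  by (real_asymp simp add: field_simps power2_eq_square power_numeral_reduce mult_ac)
lemma R2b1: fixes x :: real
  shows "\<forall>\<^sub>F s in at_top. s/2 - x/s > 0"
  by real_asymp
lemma R2b2: fixes x :: real
  shows "\<forall>\<^sub>F s in at_top. s/2 + x/s > 0"
  by real_asymp
lemma R2c: fixes x :: real
  shows "(\<lambda>s. - ln (s * (L3 (s/2 - x/s) + L3 (s/2 + x/s)) / 4) - 4 / s\<^sup>2) \<in> O[at_top](\<lambda>s. 1/s^4)"
  unfolding L3_def
  by (real_asymp simp add: field_simps power2_eq_square power_numeral_reduce mult_ac)
lemma R2d: fixes x :: real
  shows "(\<lambda>s. - ln (s * (U5 (s/2 - x/s) + U5 (s/2 + x/s)) / 4) - 4 / s\<^sup>2) \<in> O[at_top](\<lambda>s. 1/s^4)"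
  unfolding U5_def
  by (real_asymp simp add: field_simps power2_eq_square power_numeral_reduce mult_ac)
lemma R2e: "filterlim (\<lambda>s::real. s\<^sup>2 / 8) at_top at_top" by real_asymp



lemma Ncdf_eq_1_minus_Q: "Ncdf z = 1 - Q z"
  using Ncdf_sym[of z] by (simp add: Q_def)

lemma phi_exp: "phi z = exp (- z\<^sup>2 / 2) / sqrt (2 * pi)" by (simp add: phi_def)

locale bsl =
  fixes S K :: real
  assumes S_pos: "S > 0" and K_pos: "K > 0" and KS: "K \<noteq> S"
begin

definition xx where "xx = ln (K / S)"
definition BSs where "BSs s = S * Ncdf ((ln (S / K) + s\<^sup>2 / 2) / s) - K * Ncdf ((ln (S / K) - s\<^sup>2 / 2) / s)"

lemma ln_SK: "ln (S / K) = - xx"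
  using S_pos K_pos by (simp add: xx_def ln_div)

lemma K_eq: "K = S * exp xx"
  using S_pos K_pos by (simp add: xx_def)

lemma xx_ne: "xx \<noteq> 0"
  using KS S_pos K_pos by (auto simp: xx_def)

lemma BS_BSs: "T > 0 \<Longrightarrow> BS S K T \<sigma> = BSs (\<sigma> * sqrt T)"
  by (simp add: BS_def BSs_def power_mult_distrib)

lemma TV_repr:
  assumes s: "s > 0"
  defines "a \<equiv> \<bar>xx\<bar>/s - s/2" and "b \<equiv> \<bar>xx\<bar>/s + s/2"
  shows "(BSs s - max (S - K) 0) / S =
     exp (- xx\<^sup>2/(2* s\<^sup>2) + xx/2 - s\<^sup>2/8) / sqrt (2*pi) * (Q a / phi a - Q b / phi b)"
proof -
  have pa: "phi a > 0" "phi b > 0" by (simp_all add: phi_pos)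
  have arg1: "(ln (S / K) + s\<^sup>2 / 2) / s = - xx/s + s/2" and arg2: "(ln (S / K) - s\<^sup>2 / 2) / s = - xx/s - s/2"
    using s by (simp_all add: ln_SK field_simps power2_eq_square)
  define P where "P = exp (- xx\<^sup>2/(2* s\<^sup>2) + xx/2 - s\<^sup>2/8) / sqrt (2*pi)"
  show ?thesis
  proof (cases "xx > 0")
    case True
    hence y: "\<bar>xx\<bar> = xx" by simp
    have "exp xx > 1" using True by simp
    hence "S * 1 < S * exp xx" using S_pos by (intro mult_strict_left_mono)
    hence KS': "K > S" by (simp add: K_eq[symmetric])
    have e1: "- xx\<^sup>2/(2* s\<^sup>2) + xx/2 - s\<^sup>2/8 = - a\<^sup>2/2" unfolding a_def y using s
      by (simp add: field_simps power2_eq_square)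
    have e2: "- xx\<^sup>2/(2* s\<^sup>2) + xx/2 - s\<^sup>2/8 = xx + - b\<^sup>2/2" unfolding b_def y using s
      by (simp add: field_simps power2_eq_square)
    have P1: "P = phi a" unfolding P_def phi_exp e1 ..
    have P2: "P = exp xx * phi b" unfolding P_def phi_exp e2 unfolding exp_add by simp
    have A1: "-xx/s + s/2 = - a" and A2: "- xx/s - s/2 = - b" unfolding a_def b_def y by simp_all
    have B1: "BSs s = S * Q a - K * Q b" unfolding BSs_def arg1 arg2 A1 A2 Q_def[symmetric] ..
    have M: "max (S - K) 0 = 0" using KS' by simp
    have "(BSs s - max (S - K) 0) / S = (S * Q a - (S * exp xx) * Q b) / S"
      unfolding B1 M by (simp add: K_eq[symmetric])
    also have "\<dots> = Q a - exp xx * Q b" using S_pos by (simp add: field_simps)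
    also have "\<dots> = P * (Q a / phi a - Q b / phi b)"
      using pa by (simp add: P1[symmetric] P2 field_simps)
    finally show ?thesis by (simp add: P_def)
  next
    case False
    hence neg: "xx < 0" using xx_ne by simp
    hence y: "\<bar>xx\<bar> = - xx" by simp
    have "exp xx < 1" using neg by simp
    hence "S * exp xx < S * 1" using S_pos by (intro mult_strict_left_mono)
    hence KS': "K < S" by (simp add: K_eq[symmetric])
    have e1: "- xx\<^sup>2/(2* s\<^sup>2) + xx/2 - s\<^sup>2/8 = xx + - a\<^sup>2/2" unfolding a_def y using s
      by (simp add: field_simps power2_eq_square)
    have e2: "- xx\<^sup>2/(2* s\<^sup>2) + xx/2 - s\<^sup>2/8 = - b\<^sup>2/2" unfolding b_def y using s
      by (simp add: field_simps power2_eq_square)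
    have P1: "P = exp xx * phi a" unfolding P_def phi_exp e1 unfolding exp_add by simp
    have P2: "P = phi b" unfolding P_def phi_exp e2 ..
    have A1: "-xx/s + s/2 = b" and A2: "- xx/s - s/2 = a" unfolding a_def b_def y by simp_all
    have B1: "BSs s = S * (1 - Q b) - K * (1 - Q a)"
      unfolding BSs_def arg1 arg2 A1 A2 Ncdf_eq_1_minus_Q ..
    have M: "max (S - K) 0 = S - K" using KS' by simp
    have "(BSs s - max (S - K) 0) / S = ((S * exp xx) * Q a - S * Q b) / S"
      unfolding B1 M by (simp add: K_eq[symmetric] algebra_simps)
    also have "\<dots> = exp xx * Q a - Q b" using S_pos by (simp add: field_simps)
    also have "\<dots> = P * (Q a / phi a - Q b / phi b)"
      using pa by (simp add: P1 P2[symmetric] field_simps)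
    finally show ?thesis by (simp add: P_def)
  qed
qed

lemma CC_repr:
  assumes s: "s > 0"
  defines "p \<equiv> s/2 - xx/s" and "q \<equiv> s/2 + xx/s"
  shows "(S - BSs s) / S =
     exp (- s\<^sup>2/8 + xx/2 - xx\<^sup>2/(2* s\<^sup>2)) / sqrt (2*pi) * (Q p / phi p + Q q / phi q)"
proof -
  have pa: "phi p > 0" "phi q > 0" by (simp_all add: phi_pos)
  have arg1: "(ln (S / K) + s\<^sup>2 / 2) / s = p" and arg2: "(ln (S / K) - s\<^sup>2 / 2) / s = - q"
    using s by (simp_all add: ln_SK field_simps power2_eq_square p_def q_def)
  define P where "P = exp (- s\<^sup>2/8 + xx/2 - xx\<^sup>2/(2* s\<^sup>2)) / sqrt (2*pi)"
  have e1: "- s\<^sup>2/8 + xx/2 - xx\<^sup>2/(2* s\<^sup>2) = - p\<^sup>2/2" unfolding p_def using s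
    by (simp add: field_simps power2_eq_square)
  have e2: "- s\<^sup>2/8 + xx/2 - xx\<^sup>2/(2* s\<^sup>2) = xx + - q\<^sup>2/2" unfolding q_def using s
    by (simp add: field_simps power2_eq_square)
  have P1: "P = phi p" unfolding P_def phi_exp e1 ..
  have P2: "P = exp xx * phi q" unfolding P_def phi_exp e2 unfolding exp_add by simp
  have B1: "BSs s = S * (1 - Q p) - K * Q q"
    unfolding BSs_def arg1 arg2 Ncdf_eq_1_minus_Q[of p] Q_def[of q, symmetric] ..
  have "(S - BSs s) / S = (S * Q p + (S * exp xx) * Q q) / S"
    unfolding B1 by (simp add: K_eq[symmetric] algebra_simps)
  also have "\<dots> = Q p + exp xx * Q q" using S_pos by (simp add: field_simps)
  also have "\<dots> = P * (Q p / phi p + Q q / phi q)"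
    using pa by (simp add: P1[symmetric] P2 field_simps)
  finally show ?thesis by (simp add: P_def)
qed


lemma y_pos: "\<bar>xx\<bar> > 0" using xx_ne by simp

lemma Mills_ratio:
  assumes "z > 0"
  shows "L7 z \<le> Q z / phi z" "Q z / phi z \<le> U5 z" "L3 z \<le> Q z / phi z"
  using Mills_L7[OF assms] Mills_U5[OF assms] Mills_L3[OF assms] phi_pos[of z]
  by (simp_all add: pos_le_divide_eq pos_divide_le_eq mult.commute)

lemma case1_s:
  fixes \<epsilon> :: real assumes e: "\<epsilon> > 0"
  defines "\<gamma> \<equiv> ln (4 * sqrt pi * exp (- xx / 2) / \<bar>xx\<bar>)" and "\<alpha> \<equiv> xx\<^sup>2/16 + 3/2"
  shows "\<forall>\<^sub>F s in at_right 0. -1/ln((BSs s - max (S-K) 0)/S) > 0 \<and>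
     \<bar>2 * s\<^sup>2/xx\<^sup>2 - VV \<gamma> \<alpha> (-1/ln((BSs s - max (S-K) 0)/S))\<bar> \<le> \<epsilon> * (-1/ln((BSs s - max (S-K) 0)/S))^3"
proof -
  define y where "y = \<bar>xx\<bar>"
  have ypos: "y > 0" using y_pos by (simp add: y_def)
  have y2: "y\<^sup>2 = xx\<^sup>2" by (simp add: y_def)
  define Dlo where "Dlo s = L7 (y/s - s/2) - U5 (y/s + s/2)" for s
  define Dhi where "Dhi s = U5 (y/s - s/2) - L7 (y/s + s/2)" for s
  define Ef where "Ef D s = - ln (y\<^sup>2 * D / s^3) - 3 * s\<^sup>2 / y\<^sup>2" for D s
  obtain C1 where C1: "C1 > 0" "\<forall>\<^sub>F s in at_right 0. norm (Ef (Dlo s) s) \<le> C1 * norm (s^4)"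
    using R1c[OF ypos] unfolding Ef_def Dlo_def by (elim landau_o.bigE) auto
  obtain C2 where C2: "C2 > 0" "\<forall>\<^sub>F s in at_right 0. norm (Ef (Dhi s) s) \<le> C2 * norm (s^4)"
    using R1d[OF ypos] unfolding Ef_def Dhi_def by (elim landau_o.bigE) auto
  define C where "C = max C1 C2 * y^4 / 4"
  have Cnn: "C \<ge> 0" using C1 C2 by (simp add: C_def)
  have inv: "\<forall>\<^sub>F v in at_right 0. \<forall>E. \<bar>E\<bar> \<le> C* v^2 \<longrightarrow>
     1/(1/v - 3/2*ln v + \<gamma> + \<alpha>* v + E) > 0 \<and>
     \<bar>v - VV \<gamma> \<alpha> (1/(1/v - 3/2*ln v + \<gamma> + \<alpha>* v + E))\<bar> \<le> \<epsilon> * (1/(1/v - 3/2*ln v + \<gamma> + \<alpha>* v + E))^3"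
    by (rule INV1[OF Cnn e])
  have fl: "filterlim (\<lambda>s. 2 / y\<^sup>2 * s\<^sup>2) (at_right 0) (at_right 0)"
    by (rule R1e) (use ypos in simp)
  have inv': "\<forall>\<^sub>F s in at_right 0. \<forall>E. \<bar>E\<bar> \<le> C*(2 / y\<^sup>2 * s\<^sup>2)^2 \<longrightarrow>
     1/(1/(2 / y\<^sup>2 * s\<^sup>2) - 3/2*ln (2 / y\<^sup>2 * s\<^sup>2) + \<gamma> + \<alpha>*(2 / y\<^sup>2 * s\<^sup>2) + E) > 0 \<and>
     \<bar>(2 / y\<^sup>2 * s\<^sup>2) - VV \<gamma> \<alpha> (1/(1/(2 / y\<^sup>2 * s\<^sup>2) - 3/2*ln (2 / y\<^sup>2 * s\<^sup>2) + \<gamma> + \<alpha>*(2 / y\<^sup>2 * s\<^sup>2) + E))\<bar>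
       \<le> \<epsilon> * (1/(1/(2 / y\<^sup>2 * s\<^sup>2) - 3/2*ln (2 / y\<^sup>2 * s\<^sup>2) + \<gamma> + \<alpha>*(2 / y\<^sup>2 * s\<^sup>2) + E))^3"
    using eventually_compose_filterlim[OF inv fl] by simp
  have ev_pos: "\<forall>\<^sub>F s in at_right (0::real). s > 0" by (simp add: eventually_at_right_less)
  show ?thesis
    using inv' C1(2) C2(2) R1a[OF ypos] R1b[OF ypos] ev_pos
  proof eventually_elim
    case (elim s)
    define a where "a = y/s - s/2"
    define b where "b = y/s + s/2"
    have apos: "a > 0" using elim by (simp add: a_def)
    have bpos: "b > 0" using apos by (simp add: a_def b_def) (use elim in linarith)
    define D where "D = Q a / phi a - Q b / phi b"
    have Dlo: "Dlo s \<le> D" and Dhi: "D \<le> Dhi s"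
      using Mills_ratio[OF apos] Mills_ratio[OF bpos] by (simp_all add: Dlo_def Dhi_def D_def a_def b_def)
    have Dpos: "D > 0" using Dlo elim unfolding Dlo_def by simp
    define ex where "ex = - xx\<^sup>2/(2* s\<^sup>2) + xx/2 - s\<^sup>2/8"
    have TV: "(BSs s - max (S - K) 0) / S = exp ex / sqrt (2*pi) * D"
      using TV_repr[OF elim(6)] by (simp add: D_def a_def b_def y_def ex_def)
    have s0: "s > 0" by (fact elim(6))
    define E where "E = Ef D s"
    have "y\<^sup>2 * Dlo s / s^3 \<le> y\<^sup>2 * D / s^3" using Dlo s0 by (intro divide_right_mono mult_left_mono) auto
    moreover have "y\<^sup>2 * D / s^3 \<le> y\<^sup>2 * Dhi s / s^3" using Dhi s0 by (intro divide_right_mono mult_left_mono) auto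
    moreover have "y\<^sup>2 * Dlo s / s^3 > 0" using elim s0 ypos unfolding Dlo_def by simp
    ultimately have E1: "Ef (Dhi s) s \<le> E" and E2: "E \<le> Ef (Dlo s) s"
      unfolding E_def Ef_def by (auto intro!: ln_mono)
    have m1: "C1 * s^4 \<le> max C1 C2 * s^4" and m2: "C2 * s^4 \<le> max C1 C2 * s^4"
      using s0 by (intro mult_right_mono; simp)+
    have n4: "\<bar>s^4\<bar> = s^4" using s0 by simp
    have "\<bar>E\<bar> \<le> max C1 C2 * s^4" using elim(2,3) m1 m2 E1 E2
      unfolding real_norm_def n4 abs_le_iff by linarith
    also have "\<dots> = C * (2 / y\<^sup>2 * s\<^sup>2)^2" using ypos by (simp add: C_def field_simps power2_eq_square eval_nat_numeral)
    finally have Ebd: "\<bar>E\<bar> \<le> C * (2 / y\<^sup>2 * s\<^sup>2)^2" .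
    define v where "v = 2 / y\<^sup>2 * s\<^sup>2"
    have vpos: "v > 0" using s0 ypos by (simp add: v_def)
    have l1: "ln ((BSs s - max (S - K) 0) / S) = ex - ln (sqrt (2*pi)) + ln D"
      unfolding TV using Dpos by (simp add: ln_mult ln_div)
    have l2: "ln (y\<^sup>2 * D / s^3) = 2 * ln y + ln D - 3 * ln s"
      using Dpos ypos s0 by (simp add: ln_mult ln_div ln_realpow)
    have l3: "ln v = ln 2 + 2 * ln s - 2 * ln y"
      using ypos s0 by (simp add: v_def ln_mult ln_div ln_realpow)
    have l4: "\<gamma> = 2 * ln 2 + ln (sqrt pi) - xx/2 - ln y"
    proof -
      have "\<gamma> = ln 4 + ln (sqrt pi) + ln (exp (- xx/2)) - ln y"
        unfolding \<gamma>_def y_def[symmetric] using ypos by (simp add: ln_mult ln_div)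
      moreover have "ln (4::real) = 2 * ln 2"
        using ln_realpow[of 2 2] by simp
      ultimately show ?thesis by simp
    qed
    have l5: "ln (sqrt (2*pi)) = ln 2 / 2 + ln (sqrt pi)"
      by (simp add: real_sqrt_mult ln_mult ln_sqrt)
    have r1: "1/v = xx\<^sup>2/(2* s\<^sup>2)" using ypos s0 y2 by (simp add: v_def field_simps)
    have r2: "\<alpha> * v = s\<^sup>2/8 + 3 * s\<^sup>2 / y\<^sup>2" using ypos s0 y2 xx_ne by (simp add: v_def \<alpha>_def field_simps power2_eq_square)
    have key: "- ln ((BSs s - max (S - K) 0) / S) = 1/v - 3/2 * ln v + \<gamma> + \<alpha> * v + E"
      unfolding l1 E_def Ef_def l2 r1 r2 l4 l3 ex_def l5 by (simp add: algebra_simps)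
    have lam: "-1/ln((BSs s - max (S-K) 0)/S) = 1/(1/v - 3/2 * ln v + \<gamma> + \<alpha> * v + E)"
      using key by (simp add: divide_simps)
    have vv: "2 * s\<^sup>2/xx\<^sup>2 = v" using y2 by (simp add: v_def)
    show ?case unfolding lam vv using elim(1) Ebd unfolding v_def by blast
  qed
qed


lemma case2_s:
  fixes \<epsilon> :: real assumes e: "\<epsilon> > 0"
  defines "\<gamma> \<equiv> ln (sqrt pi * exp (- xx / 2))" and "\<alpha> \<equiv> xx\<^sup>2/16 + 1/2"
  shows "\<forall>\<^sub>F s in at_top. -1/ln((S - BSs s)/S) > 0 \<and> -1/ln((S - BSs s)/S) \<le> 16 / s\<^sup>2 \<and>
     \<bar>s\<^sup>2/8 * (-1/ln((S - BSs s)/S)) - WW \<gamma> \<alpha> (-1/ln((S - BSs s)/S))\<bar> \<le> \<epsilon> * (-1/ln((S - BSs s)/S))\<^sup>2"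
proof -
  define Rlo where "Rlo s = L3 (s/2 - xx/s) + L3 (s/2 + xx/s)" for s
  define Rhi where "Rhi s = U5 (s/2 - xx/s) + U5 (s/2 + xx/s)" for s
  define Ef where "Ef R s = - ln (s * R / 4) - 4 / s\<^sup>2" for R s :: real
  obtain C1 where C1: "C1 > 0" "\<forall>\<^sub>F s in at_top. norm (Ef (Rlo s) s) \<le> C1 * norm (1/s^4)"
    using R2c[of xx] unfolding Ef_def Rlo_def by (elim landau_o.bigE) auto
  obtain C2 where C2: "C2 > 0" "\<forall>\<^sub>F s in at_top. norm (Ef (Rhi s) s) \<le> C2 * norm (1/s^4)"
    using R2d[of xx] unfolding Ef_def Rhi_def by (elim landau_o.bigE) auto
  define C where "C = max C1 C2 / 64"
  have Cnn: "C \<ge> 0" using C1 C2 by (simp add: C_def)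
  have inv: "\<forall>\<^sub>F w in at_top. \<forall>E. \<bar>E\<bar> \<le> C/w^2 \<longrightarrow>
     1/(w + 1/2*ln w + \<gamma> + \<alpha>/w + E) > 0 \<and> 1/(w + 1/2*ln w + \<gamma> + \<alpha>/w + E) \<le> 2/w \<and>
     \<bar>w * (1/(w + 1/2*ln w + \<gamma> + \<alpha>/w + E)) - WW \<gamma> \<alpha> (1/(w + 1/2*ln w + \<gamma> + \<alpha>/w + E))\<bar>
        \<le> \<epsilon> * (1/(w + 1/2*ln w + \<gamma> + \<alpha>/w + E))^2"
    by (rule INV2[OF Cnn e])
  have inv': "\<forall>\<^sub>F s in at_top. \<forall>E. \<bar>E\<bar> \<le> C/(s\<^sup>2/8)^2 \<longrightarrow>
     1/((s\<^sup>2/8) + 1/2*ln (s\<^sup>2/8) + \<gamma> + \<alpha>/(s\<^sup>2/8) + E) > 0 \<and>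
     1/((s\<^sup>2/8) + 1/2*ln (s\<^sup>2/8) + \<gamma> + \<alpha>/(s\<^sup>2/8) + E) \<le> 2/(s\<^sup>2/8) \<and>
     \<bar>(s\<^sup>2/8) * (1/((s\<^sup>2/8) + 1/2*ln (s\<^sup>2/8) + \<gamma> + \<alpha>/(s\<^sup>2/8) + E))
        - WW \<gamma> \<alpha> (1/((s\<^sup>2/8) + 1/2*ln (s\<^sup>2/8) + \<gamma> + \<alpha>/(s\<^sup>2/8) + E))\<bar>
        \<le> \<epsilon> * (1/((s\<^sup>2/8) + 1/2*ln (s\<^sup>2/8) + \<gamma> + \<alpha>/(s\<^sup>2/8) + E))^2"
    using eventually_compose_filterlim[OF inv R2e] by simp
  have ev_pos: "\<forall>\<^sub>F s in at_top. (s::real) > 0" by (rule eventually_gt_at_top)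
  show ?thesis
    using inv' C1(2) C2(2) R2a[of xx] R2b1[of xx] R2b2[of xx] ev_pos
  proof eventually_elim
    case (elim s)
    have s0: "s > 0" by (fact elim(7))
    define p where "p = s/2 - xx/s"
    define q where "q = s/2 + xx/s"
    have ppos: "p > 0" and qpos: "q > 0" using elim by (simp_all add: p_def q_def)
    define R where "R = Q p / phi p + Q q / phi q"
    have Rlo: "Rlo s \<le> R" and Rhi: "R \<le> Rhi s"
      using Mills_ratio[OF ppos] Mills_ratio[OF qpos] by (simp_all add: Rlo_def Rhi_def R_def p_def q_def)
    have Rpos: "R > 0" using Rlo elim unfolding Rlo_def by simp
    define ex where "ex = - s\<^sup>2/8 + xx/2 - xx\<^sup>2/(2* s\<^sup>2)"
    have CC: "(S - BSs s) / S = exp ex / sqrt (2*pi) * R"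
      using CC_repr[OF s0] by (simp add: R_def p_def q_def ex_def)
    define E where "E = Ef R s"
    have "s * Rlo s / 4 \<le> s * R / 4" using Rlo s0 by simp
    moreover have "s * R / 4 \<le> s * Rhi s / 4" using Rhi s0 by simp
    moreover have "s * Rlo s / 4 > 0" using elim s0 unfolding Rlo_def by simp
    ultimately have E1: "Ef (Rhi s) s \<le> E" and E2: "E \<le> Ef (Rlo s) s"
      unfolding E_def Ef_def by (auto intro!: ln_mono)
    have m1: "C1 * (1/s^4) \<le> max C1 C2 * (1/s^4)" and m2: "C2 * (1/s^4) \<le> max C1 C2 * (1/s^4)"
      using s0 by (intro mult_right_mono; simp)+
    have n4: "\<bar>1/s^4\<bar> = 1/s^4" using s0 by simp
    have "\<bar>E\<bar> \<le> max C1 C2 * (1/s^4)" using elim(2,3) m1 m2 E1 E2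
      unfolding real_norm_def n4 abs_le_iff by linarith
    also have "\<dots> = C/(s\<^sup>2/8)^2" using s0 by (simp add: C_def field_simps power2_eq_square eval_nat_numeral)
    finally have Ebd: "\<bar>E\<bar> \<le> C/(s\<^sup>2/8)^2" .
    define w where "w = s\<^sup>2/8"
    have l1: "ln ((S - BSs s) / S) = ex - ln (sqrt (2*pi)) + ln R"
      unfolding CC using Rpos by (simp add: ln_mult ln_div)
    have l4: "ln (4::real) = 2 * ln 2" using ln_realpow[of 2 2] by simp
    have l8: "ln (8::real) = 3 * ln 2" using ln_realpow[of 2 3] by simp
    have l2: "ln (s * R / 4) = ln s + ln R - 2 * ln 2"
      using Rpos s0 l4 by (simp add: ln_mult ln_div)
    have l3: "ln w = 2 * ln s - 3 * ln 2"
      using s0 l8 by (simp add: w_def ln_div ln_realpow)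
    have lg: "\<gamma> = ln (sqrt pi) - xx/2"
      unfolding \<gamma>_def by (simp add: ln_mult)
    have l5: "ln (sqrt (2*pi)) = ln 2 / 2 + ln (sqrt pi)"
      by (simp add: real_sqrt_mult ln_mult ln_sqrt)
    have r1: "\<alpha> / w = xx\<^sup>2/(2* s\<^sup>2) + 4 / s\<^sup>2" using s0 by (simp add: w_def \<alpha>_def field_simps power2_eq_square)
    have key: "- ln ((S - BSs s) / S) = w + 1/2 * ln w + \<gamma> + \<alpha> / w + E"
      unfolding l1 E_def Ef_def l2 r1 lg l3 ex_def l5 by (simp add: algebra_simps w_def)
    have lam: "-1/ln((S - BSs s)/S) = 1/(w + 1/2 * ln w + \<gamma> + \<alpha> / w + E)"
      using key by (simp add: divide_simps)
    have w16: "2 / (s\<^sup>2/8) = 16 / s\<^sup>2" by simp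
    show ?case unfolding lam using elim(1) Ebd unfolding w_def w16 by (simp add: power2_eq_square)
  qed
qed

end



lemma WW_lim: "((\<lambda>l. WW g a l) \<longlongrightarrow> 1) (at_right 0)"
  unfolding WW_def by real_asymp

theorem proposition5:
  fixes S K :: real and sig C :: "real \<Rightarrow> real"
  assumes S_pos: "S > 0" and K_pos: "K > 0" and KS: "K \<noteq> S"
    and sig_pos: "\<forall>T>0. sig T > 0"
    and C_def: "\<forall>T>0. C T = BS S K T (sig T)"
  defines "x \<equiv> ln (K / S)"
  shows
   "(((\<lambda>T. sig T * sqrt T) \<longlongrightarrow> 0) (at_right 0) \<longrightarrow>
      (let TV = (\<lambda>T. C T - max (S - K) 0);
           lam = (\<lambda>T. - 1 / ln (TV T / S));
           \<gamma> = ln (4 * sqrt pi * exp (- x / 2) / \<bar>x\<bar>);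
           \<alpha>\<^sub>1 = - 3 / 2 - x\<^sup>2 / 16
       in \<exists>r. r \<in> o[at_right 0](\<lambda>T. lam T ^ 3) \<and>
          (\<forall>\<^sub>F T in at_right 0. (sig T)\<^sup>2 * T = x\<^sup>2 / 2 *
             (lam T - 3 / 2 * (lam T)\<^sup>2 * ln (lam T) + \<gamma> * (lam T)\<^sup>2
              + 9 / 4 * lam T ^ 3 * (ln (lam T))\<^sup>2
              + (9 / 4 - 3 * \<gamma>) * lam T ^ 3 * ln (lam T)
              + (\<gamma>\<^sup>2 - 3 / 2 * \<gamma> - \<alpha>\<^sub>1) * lam T ^ 3 + r T))))
    \<and>
    (filterlim (\<lambda>T. sig T * sqrt T) at_top at_top \<longrightarrow>
      (let CC = (\<lambda>T. S - C T);
           lam = (\<lambda>T. - 1 / ln (CC T / S));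
           \<gamma> = ln (sqrt pi * exp (- x / 2));
           \<alpha>\<^sub>1 = - 1 / 2 - x\<^sup>2 / 16
       in (\<exists>r. r \<in> o[at_top](\<lambda>T. (lam T)\<^sup>2) \<and>
            (\<forall>\<^sub>F T in at_top. (sig T)\<^sup>2 * T = 8 / lam T *
               (1 + 1 / 2 * lam T * ln (lam T) - \<gamma> * lam T
                - 1 / 4 * (lam T)\<^sup>2 * ln (lam T)
                + (\<gamma> / 2 + \<alpha>\<^sub>1) * (lam T)\<^sup>2 + r T)))
          \<and> sig \<sim>[at_top] (\<lambda>T. 2 * sqrt (- 2 * ln (CC T / S) / T))))"
proof -
  interpret bsl S K by unfold_locales (fact S_pos K_pos KS)+
  have x_xx: "x = xx" by (simp add: x_def xx_def)
  have xne: "x \<noteq> 0" using xx_ne x_xx by simp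
  define sT where "sT T = sig T * sqrt T" for T
  have sT2: "(sig T)\<^sup>2 * T = (sT T)\<^sup>2" if "T > 0" for T
    using that by (simp add: sT_def power_mult_distrib)
  have CT: "C T = BSs (sT T)" if "T > 0" for T
    using that C_def by (simp add: BS_BSs sT_def)
  have sTpos: "sT T > 0" if "T > 0" for T using that sig_pos by (simp add: sT_def)

  show ?thesis
  proof (intro conjI impI)
    assume lim0: "((\<lambda>T. sig T * sqrt T) \<longlongrightarrow> 0) (at_right 0)"
    have fl: "filterlim sT (at_right 0) (at_right 0)"
      unfolding filterlim_at
    proof
      show "\<forall>\<^sub>F T in at_right 0. sT T \<in> {0<..} \<and> sT T \<noteq> 0"
        using eventually_at_right_less[of 0]
      proof eventually_elim
        case (elim T)
        then show ?case using sTpos[of T] by simp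
      qed
      show "(sT \<longlongrightarrow> 0) (at_right 0)" using lim0 by (simp add: sT_def[abs_def])
    qed
    define \<gamma> where "\<gamma> = ln (4 * sqrt pi * exp (- x / 2) / \<bar>x\<bar>)"
    define \<alpha> where "\<alpha> = x\<^sup>2/16 + 3/2"
    define lam where "lam T = - 1 / ln ((C T - max (S - K) 0) / S)" for T
    define r where "r T = 2 * (sig T)\<^sup>2 * T / x\<^sup>2 - VV \<gamma> \<alpha> (lam T)" for T
    have ro: "r \<in> o[at_right 0](\<lambda>T. lam T ^ 3)"
    proof (rule landau_o.smallI)
      fix c :: real assume c: "c > 0"
      have ev: "\<forall>\<^sub>F T in at_right 0. -1/ln((BSs (sT T) - max (S-K) 0)/S) > 0 \<and>
         \<bar>2 * (sT T)\<^sup>2/xx\<^sup>2 - VV \<gamma> \<alpha> (-1/ln((BSs (sT T) - max (S-K) 0)/S))\<bar>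
           \<le> c * (-1/ln((BSs (sT T) - max (S-K) 0)/S))^3"
        using eventually_compose_filterlim[OF case1_s[OF c] fl] unfolding \<gamma>_def \<alpha>_def x_xx .
      show "\<forall>\<^sub>F T in at_right 0. norm (r T) \<le> c * norm (lam T ^ 3)"
        using ev eventually_at_right_less[of 0]
      proof eventually_elim
        case (elim T)
        have lamT: "lam T = -1/ln((BSs (sT T) - max (S-K) 0)/S)" using CT[OF elim(2)] by (simp add: lam_def)
        have rT: "r T = 2 * (sT T)\<^sup>2/xx\<^sup>2 - VV \<gamma> \<alpha> (lam T)"
          using sT2[OF elim(2)] by (simp add: r_def x_xx)
        show ?case using elim(1) unfolding rT lamT by simp
      qed
    qed
    have eq: "(sig T)\<^sup>2 * T = x\<^sup>2 / 2 *
             (lam T - 3 / 2 * (lam T)\<^sup>2 * ln (lam T) + \<gamma> * (lam T)\<^sup>2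
              + 9 / 4 * lam T ^ 3 * (ln (lam T))\<^sup>2
              + (9 / 4 - 3 * \<gamma>) * lam T ^ 3 * ln (lam T)
              + (\<gamma>\<^sup>2 - 3 / 2 * \<gamma> - (- 3 / 2 - x\<^sup>2 / 16)) * lam T ^ 3 + r T)" for T
    proof -
      have "lam T - 3 / 2 * (lam T)\<^sup>2 * ln (lam T) + \<gamma> * (lam T)\<^sup>2
              + 9 / 4 * lam T ^ 3 * (ln (lam T))\<^sup>2
              + (9 / 4 - 3 * \<gamma>) * lam T ^ 3 * ln (lam T)
              + (\<gamma>\<^sup>2 - 3 / 2 * \<gamma> - (- 3 / 2 - x\<^sup>2 / 16)) * lam T ^ 3 = VV \<gamma> \<alpha> (lam T)"
        unfolding VV_def \<alpha>_def by (simp add: algebra_simps)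
      thus ?thesis using xne by (simp add: r_def field_simps)
    qed
    show "let TV = (\<lambda>T. C T - max (S - K) 0);
           lam = (\<lambda>T. - 1 / ln (TV T / S));
           \<gamma> = ln (4 * sqrt pi * exp (- x / 2) / \<bar>x\<bar>);
           \<alpha>\<^sub>1 = - 3 / 2 - x\<^sup>2 / 16
       in \<exists>r. r \<in> o[at_right 0](\<lambda>T. lam T ^ 3) \<and>
          (\<forall>\<^sub>F T in at_right 0. (sig T)\<^sup>2 * T = x\<^sup>2 / 2 *
             (lam T - 3 / 2 * (lam T)\<^sup>2 * ln (lam T) + \<gamma> * (lam T)\<^sup>2
              + 9 / 4 * lam T ^ 3 * (ln (lam T))\<^sup>2
              + (9 / 4 - 3 * \<gamma>) * lam T ^ 3 * ln (lam T)
              + (\<gamma>\<^sup>2 - 3 / 2 * \<gamma> - \<alpha>\<^sub>1) * lam T ^ 3 + r T))"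
      unfolding Let_def lam_def[symmetric] \<gamma>_def[symmetric]
      by (intro exI[of _ r] conjI ro always_eventually allI eq)
  next
    assume limT: "filterlim (\<lambda>T. sig T * sqrt T) at_top at_top"
    have fl: "filterlim sT at_top at_top" using limT by (simp add: sT_def[abs_def])
    define \<gamma> where "\<gamma> = ln (sqrt pi * exp (- x / 2))"
    define \<alpha> where "\<alpha> = x\<^sup>2/16 + 1/2"
    define lam where "lam T = - 1 / ln ((S - C T) / S)" for T
    define r where "r T = (sig T)\<^sup>2 * T / 8 * lam T - WW \<gamma> \<alpha> (lam T)" for T
    have ev: "\<forall>\<^sub>F T in at_top. lam T > 0 \<and> lam T \<le> 16 / (sT T)\<^sup>2 \<and>
         \<bar>r T\<bar> \<le> c * (lam T)\<^sup>2" if c: "c > 0" for c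
    proof -
      have ev: "\<forall>\<^sub>F T in at_top. -1/ln((S - BSs (sT T))/S) > 0 \<and> -1/ln((S - BSs (sT T))/S) \<le> 16 / (sT T)\<^sup>2 \<and>
         \<bar>(sT T)\<^sup>2/8 * (-1/ln((S - BSs (sT T))/S)) - WW \<gamma> \<alpha> (-1/ln((S - BSs (sT T))/S))\<bar>
           \<le> c * (-1/ln((S - BSs (sT T))/S))\<^sup>2"
        using eventually_compose_filterlim[OF case2_s[OF c] fl] unfolding \<gamma>_def \<alpha>_def x_xx .
      show ?thesis
        using ev eventually_gt_at_top[of 0]
      proof eventually_elim
        case (elim T)
        have lamT: "lam T = -1/ln((S - BSs (sT T))/S)" using CT[OF elim(2)] by (simp add: lam_def)
        have rT: "r T = (sT T)\<^sup>2/8 * lam T - WW \<gamma> \<alpha> (lam T)"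
          using sT2[OF elim(2)] by (simp add: r_def)
        show ?case using elim(1) unfolding rT lamT by simp
      qed
    qed
    have ro: "r \<in> o[at_top](\<lambda>T. (lam T)\<^sup>2)"
    proof (rule landau_o.smallI)
      fix c :: real assume c: "c > 0"
      show "\<forall>\<^sub>F T in at_top. norm (r T) \<le> c * norm ((lam T)\<^sup>2)"
        using ev[OF c] by eventually_elim simp
    qed
    have eq: "\<forall>\<^sub>F T in at_top. (sig T)\<^sup>2 * T = 8 / lam T *
               (1 + 1 / 2 * lam T * ln (lam T) - \<gamma> * lam T
                - 1 / 4 * (lam T)\<^sup>2 * ln (lam T)
                + (\<gamma> / 2 + (- 1 / 2 - x\<^sup>2 / 16)) * (lam T)\<^sup>2 + r T)"
      using ev[OF zero_less_one]
    proof eventually_elim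
      case (elim T)
      have "1 + 1 / 2 * lam T * ln (lam T) - \<gamma> * lam T
                - 1 / 4 * (lam T)\<^sup>2 * ln (lam T)
                + (\<gamma> / 2 + (- 1 / 2 - x\<^sup>2 / 16)) * (lam T)\<^sup>2 = WW \<gamma> \<alpha> (lam T)"
        unfolding WW_def \<alpha>_def by (simp add: algebra_simps)
      thus ?case using elim by (simp add: r_def field_simps)
    qed
    have lam0: "(lam \<longlongrightarrow> 0) at_top"
    proof (rule tendsto_sandwich[of "\<lambda>_. 0" _ _ "\<lambda>T. 16 / (sT T)\<^sup>2"])
      show "\<forall>\<^sub>F T in at_top. 0 \<le> lam T" "\<forall>\<^sub>F T in at_top. lam T \<le> 16 / (sT T)\<^sup>2"
        using ev[OF zero_less_one] by (eventually_elim, simp)+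
      have "((\<lambda>u::real. 16 / u\<^sup>2) \<longlongrightarrow> 0) at_top" by real_asymp
      thus "((\<lambda>T. 16 / (sT T)\<^sup>2) \<longlongrightarrow> 0) at_top" using filterlim_compose[OF _ fl] by blast
    qed simp
    have lamR: "filterlim lam (at_right 0) at_top"
      unfolding filterlim_at using lam0 ev[OF zero_less_one] by (auto elim: eventually_mono)
    have W1: "((\<lambda>T. WW \<gamma> \<alpha> (lam T)) \<longlongrightarrow> 1) at_top"
      using filterlim_compose[OF WW_lim lamR] .
    have r0: "(r \<longlongrightarrow> 0) at_top"
    proof (rule tendsto_sandwich[of "\<lambda>T. - (lam T)\<^sup>2" _ _ "\<lambda>T. (lam T)\<^sup>2"])
      show "\<forall>\<^sub>F T in at_top. - (lam T)\<^sup>2 \<le> r T" "\<forall>\<^sub>F T in at_top. r T \<le> (lam T)\<^sup>2"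
        using ev[OF zero_less_one] by (eventually_elim, simp add: abs_le_iff)+
      show "((\<lambda>T. - (lam T)\<^sup>2) \<longlongrightarrow> 0) at_top" "((\<lambda>T. (lam T)\<^sup>2) \<longlongrightarrow> 0) at_top"
        using tendsto_power[OF lam0, of 2] tendsto_minus[OF tendsto_power[OF lam0, of 2]] by simp_all
    qed
    have prod1: "((\<lambda>T. (sig T)\<^sup>2 * T / 8 * lam T) \<longlongrightarrow> 1) at_top"
    proof -
      have "((\<lambda>T. WW \<gamma> \<alpha> (lam T) + r T) \<longlongrightarrow> 1 + 0) at_top" by (intro tendsto_add W1 r0)
      thus ?thesis by (simp add: r_def)
    qed
    have ratio: "((\<lambda>T. sig T / (2 * sqrt (- 2 * ln ((S - C T) / S) / T))) \<longlongrightarrow> 1) at_top"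
    proof -
      have "((\<lambda>T. sqrt ((sig T)\<^sup>2 * T / 8 * lam T)) \<longlongrightarrow> sqrt 1) at_top"
        by (intro tendsto_real_sqrt prod1)
      moreover have "\<forall>\<^sub>F T in at_top. sqrt ((sig T)\<^sup>2 * T / 8 * lam T) = sig T / (2 * sqrt (- 2 * ln ((S - C T) / S) / T))"
        using ev[OF zero_less_one] eventually_gt_at_top[of 0]
      proof eventually_elim
        case (elim T)
        have lp: "lam T > 0" using elim by simp
        have ln_eq: "- 2 * ln ((S - C T) / S) / T = 2 / (lam T * T)"
          using lp by (simp add: lam_def field_simps)
        have sp: "sig T > 0" using sig_pos elim by simp
        define u where "u = lam T * T"
        have up: "u > 0" using lp elim(2) by (simp add: u_def)
        have A: "sqrt ((sig T)\<^sup>2 * T / 8 * lam T) = sig T * sqrt (u / 8)"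
        proof -
          have e: "(sig T)\<^sup>2 * T / 8 * lam T = (sig T)\<^sup>2 * (u / 8)" by (simp add: u_def)
          have "sqrt ((sig T)\<^sup>2 * T / 8 * lam T) = sqrt ((sig T)\<^sup>2 * (u / 8))" by (simp only: e)
          also have "\<dots> = sig T * sqrt (u / 8)" using sp by (simp only: real_sqrt_mult real_sqrt_abs abs_of_pos)
          finally show ?thesis .
        qed
        have "sqrt (2 / u) * sqrt (u / 8) = sqrt (1/4)" using up by (simp flip: real_sqrt_mult)
        also have "sqrt (1/4) = (1/2::real)" by (simp add: real_sqrt_divide)
        finally have B: "2 * sqrt (2 / u) * sqrt (u / 8) = 1" by simp
        have "sig T / (2 * sqrt (2 / (lam T * T))) = sqrt ((sig T)\<^sup>2 * T / 8 * lam T)"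
          unfolding A u_def[symmetric] using B up
          by (simp add: field_simps)
        thus ?case using ln_eq by simp
      qed
      ultimately show ?thesis by (simp add: tendsto_cong)
    qed
    have equiv: "sig \<sim>[at_top] (\<lambda>T. 2 * sqrt (- 2 * ln ((S - C T) / S) / T))"
      by (rule asymp_equivI'[OF ratio])
    show "let CC = (\<lambda>T. S - C T);
           lam = (\<lambda>T. - 1 / ln (CC T / S));
           \<gamma> = ln (sqrt pi * exp (- x / 2));
           \<alpha>\<^sub>1 = - 1 / 2 - x\<^sup>2 / 16
       in (\<exists>r. r \<in> o[at_top](\<lambda>T. (lam T)\<^sup>2) \<and>
            (\<forall>\<^sub>F T in at_top. (sig T)\<^sup>2 * T = 8 / lam T *
               (1 + 1 / 2 * lam T * ln (lam T) - \<gamma> * lam T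
                - 1 / 4 * (lam T)\<^sup>2 * ln (lam T)
                + (\<gamma> / 2 + \<alpha>\<^sub>1) * (lam T)\<^sup>2 + r T)))
          \<and> sig \<sim>[at_top] (\<lambda>T. 2 * sqrt (- 2 * ln (CC T / S) / T))"
      unfolding Let_def lam_def[symmetric] \<gamma>_def[symmetric]
      by (intro conjI exI[of _ r] ro eq equiv)
  qed
qed


end
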